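(* Consider the equation $u_{tx}=u-i|u|^2u_x$. Let $k,\Omega\in\mathbb{R}$ and let $\varphi,\theta:\mathbb{R}\to\mathbb{R}$ be $C^2$ functions such that $u(x,t)=\varphi(x)e^{i(kx-\Omega t+\theta(x))}$ (i.e. a traveling wave of the form $\varphi(x-ct)e^{i(kx-\Omega t+\theta(x-ct))}$ with speed $c=0$) is a solution. Then $\varphi$ is constant. If moreover this constant is nonzero, then $\Omega\neq\varphi^2$ and $\theta_x$ is constant, given by $$\theta_x=\frac{k\varphi^2-k\Omega+1}{\Omega-\varphi^2}.$$ *)

theory Defs
  imports "HOL-Analysis.Analysis"
begin

definition C2 :: "(real \<Rightarrow> real) \<Rightarrow> bool" where
  "C2 f \<longleftrightarrow> f differentiable_on UNIV \<and> (deriv f) differentiable_on UNIV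
      \<and> continuous_on UNIV (deriv (deriv f))"

definition pdx :: "(real \<Rightarrow> real \<Rightarrow> complex) \<Rightarrow> real \<Rightarrow> real \<Rightarrow> complex" where
  "pdx u x t = vector_derivative (\<lambda>y. u y t) (at x)"

definition pdt :: "(real \<Rightarrow> real \<Rightarrow> complex) \<Rightarrow> real \<Rightarrow> real \<Rightarrow> complex" where
  "pdt u x t = vector_derivative (\<lambda>s. u x s) (at t)"

definition solves_eq :: "(real \<Rightarrow> real \<Rightarrow> complex) \<Rightarrow> bool" where
  "solves_eq u \<longleftrightarrow>
     (\<forall>x t. (\<lambda>y. u y t) differentiable (at x)) \<and>
     (\<forall>x t. (\<lambda>s. pdx u x s) differentiable (at t)) \<and>
     (\<forall>x t. pdt (pdx u) x t = u x t - \<i> * complex_of_real ((cmod (u x t))\<^sup>2) * pdx u x t)"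

end

theory Submission imports Defs begin

lemma vd_exp:
  assumes "(g has_real_derivative g') (at y)"
  shows "((\<lambda>y. exp (\<i> * complex_of_real (g y))) has_vector_derivative
           (\<i> * complex_of_real g' * exp (\<i> * complex_of_real (g y)))) (at y)"
proof -
  have 1: "((\<lambda>y. \<i> * complex_of_real (g y)) has_vector_derivative (\<i> * complex_of_real g')) (at y)"
    using has_vector_derivative_mult_right[OF has_vector_derivative_of_real[OF assms], of \<i>] by simp
  have "((exp \<circ> (\<lambda>y. \<i> * complex_of_real (g y))) has_vector_derivative
           (\<i> * complex_of_real g' * exp (\<i> * complex_of_real (g y)))) (at y)"
    by (rule field_vector_diff_chain_at[OF 1]) (rule DERIV_exp)
  then show ?thesis by (simp add: o_def)
qed

lemma vd_u:
  assumes "(\<phi> has_real_derivative p') (at y)" "(\<theta> has_real_derivative q') (at y)"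
  shows "((\<lambda>y. complex_of_real (\<phi> y) * exp (\<i> * complex_of_real (k * y - \<Omega> * t + \<theta> y)))
     has_vector_derivative ((complex_of_real p' + \<i> * complex_of_real (\<phi> y) * complex_of_real (k + q'))
        * exp (\<i> * complex_of_real (k * y - \<Omega> * t + \<theta> y)))) (at y)"
proof -
  have g: "((\<lambda>y. k * y - \<Omega> * t + \<theta> y) has_real_derivative (k + q')) (at y)"
    using assms(2) by (auto intro!: derivative_eq_intros)
  show ?thesis
    using has_vector_derivative_mult[OF has_vector_derivative_of_real[OF assms(1)] vd_exp[OF g]]
    by (simp add: algebra_simps)
qed

lemma vd_t:
  "((\<lambda>s. B * exp (\<i> * complex_of_real (k * x - \<Omega> * s + c)))
     has_vector_derivative (B * exp (\<i> * complex_of_real (k * x - \<Omega> * t + c)) * (- \<i> * complex_of_real \<Omega>))) (at t)"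
proof -
  have g: "((\<lambda>s. k * x - \<Omega> * s + c) has_real_derivative (- \<Omega>)) (at t)"
    by (auto intro!: derivative_eq_intros)
  show ?thesis
    using has_vector_derivative_mult_right[OF vd_exp[OF g], of B]
    by (simp add: algebra_simps)
qed

theorem mainTheorem6:
  fixes k \<Omega> :: real and \<phi> \<theta> :: "real \<Rightarrow> real"
  assumes "C2 \<phi>" and "C2 \<theta>"
    and "solves_eq (\<lambda>x t. complex_of_real (\<phi> x) * exp (\<i> * complex_of_real (k * x - \<Omega> * t + \<theta> x)))"
  shows "\<exists>c. (\<forall>x. \<phi> x = c) \<and>
           (c \<noteq> 0 \<longrightarrow> \<Omega> \<noteq> c\<^sup>2 \<and>
              (\<forall>x. deriv \<theta> x = (k * c\<^sup>2 - k * \<Omega> + 1) / (\<Omega> - c\<^sup>2)))"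
proof -
  define u where "u = (\<lambda>x t. complex_of_real (\<phi> x) * exp (\<i> * complex_of_real (k * x - \<Omega> * t + \<theta> x)))"
  have dp: "\<And>x. (\<phi> has_real_derivative deriv \<phi> x) (at x)"
    using assms(1) unfolding C2_def
    by (meson DERIV_deriv_iff_real_differentiable UNIV_I differentiable_on_def differentiable_at_withinI)
  have dt: "\<And>x. (\<theta> has_real_derivative deriv \<theta> x) (at x)"
    using assms(2) unfolding C2_def
    by (meson DERIV_deriv_iff_real_differentiable UNIV_I differentiable_on_def differentiable_at_withinI)
  define A where "A x = complex_of_real (deriv \<phi> x) + \<i> * complex_of_real (\<phi> x) * complex_of_real (k + deriv \<theta> x)" for x
  define E where "E x s = exp (\<i> * complex_of_real (k * x - \<Omega> * s + \<theta> x))" for x s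
  have px: "pdx u x s = A x * E x s" for x s
    unfolding pdx_def u_def A_def E_def by (rule vector_derivative_at[OF vd_u[OF dp dt]])
  have pt: "pdt (pdx u) x t = A x * E x t * (- \<i> * complex_of_real \<Omega>)" for x t
  proof -
    have "pdx u x = (\<lambda>s. A x * exp (\<i> * complex_of_real (k * x - \<Omega> * s + \<theta> x)))"
      using px by (auto simp: E_def)
    then have "pdt (pdx u) x t = vector_derivative (\<lambda>s. A x * exp (\<i> * complex_of_real (k * x - \<Omega> * s + \<theta> x))) (at t)"
      unfolding pdt_def by simp
    also have "\<dots> = A x * E x t * (- \<i> * complex_of_real \<Omega>)"
      unfolding E_def by (rule vector_derivative_at[OF vd_t])
    finally show ?thesis .
  qed
  have cm: "cmod (u x t) = \<bar>\<phi> x\<bar>" for x t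
    unfolding u_def norm_mult by (simp add: norm_exp_i_times)
  have key: "A x * (- \<i> * complex_of_real \<Omega>) = complex_of_real (\<phi> x) - \<i> * complex_of_real ((\<phi> x)\<^sup>2) * A x" for x
  proof -
    have "pdt (pdx u) x 0 = u x 0 - \<i> * complex_of_real ((cmod (u x 0))\<^sup>2) * pdx u x 0"
      using assms(3) unfolding solves_eq_def u_def by blast
    then have "(A x * (- \<i> * complex_of_real \<Omega>)) * E x 0 = (complex_of_real (\<phi> x) - \<i> * complex_of_real ((\<phi> x)\<^sup>2) * A x) * E x 0"
      unfolding pt px cm by (simp add: u_def E_def algebra_simps)
    moreover have "E x 0 \<noteq> 0" by (simp add: E_def)
    ultimately show ?thesis using mult_right_cancel by blast
  qed
  have re: "\<Omega> * \<phi> x * (k + deriv \<theta> x) = \<phi> x + (\<phi> x)^3 * (k + deriv \<theta> x)" for x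
    using arg_cong[OF key[of x], of Re] by (simp add: A_def power2_eq_square power3_eq_cube algebra_simps)
  have im: "\<Omega> * deriv \<phi> x = (\<phi> x)^2 * deriv \<phi> x" for x
    using arg_cong[OF key[of x], of Im] by (simp add: A_def power2_eq_square algebra_simps)
  have ne: "\<phi> x \<noteq> 0 \<Longrightarrow> \<Omega> \<noteq> (\<phi> x)^2" for x
    using re[of x] by (auto simp: power2_eq_square power3_eq_cube algebra_simps)
  have pp: "\<phi> x * deriv \<phi> x = 0" for x
    using im[of x] ne[of x] by (cases "\<phi> x = 0") auto
  have sq: "(\<phi> x)^2 = (\<phi> 0)^2" for x
  proof -
    have "\<forall>y. ((\<lambda>x. (\<phi> x)^2) has_real_derivative 0) (at y)"
    proof
      fix y
      show "((\<lambda>x. (\<phi> x)^2) has_real_derivative 0) (at y)"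
        using dp[of y] pp[of y] by (auto intro!: derivative_eq_intros simp: algebra_simps)
    qed
    then show ?thesis by (rule DERIV_isconst_all)
  qed
  have const: "\<phi> x = \<phi> 0" for x
  proof (cases "\<phi> 0 = 0")
    case True then show ?thesis using sq[of x] by simp
  next
    case False
    have "\<forall>y. (\<phi> has_real_derivative 0) (at y)"
    proof
      fix y
      have "\<phi> y \<noteq> 0" using sq[of y] False by auto
      then have "deriv \<phi> y = 0" using pp[of y] by simp
      then show "(\<phi> has_real_derivative 0) (at y)" using dp[of y] by simp
    qed
    then show ?thesis by (rule DERIV_isconst_all)
  qed
  show ?thesis
  proof (intro exI conjI allI impI)
    fix x show "\<phi> x = \<phi> 0" by (rule const)
  next
    assume h: "\<phi> 0 \<noteq> 0"
    show "\<Omega> \<noteq> (\<phi> 0)^2" using ne[OF h] .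
  next
    fix x assume h: "\<phi> 0 \<noteq> 0"
    have n: "\<Omega> - (\<phi> 0)^2 \<noteq> 0" using ne[OF h] by simp
    have "\<phi> 0 * ((\<Omega> - (\<phi> 0)^2) * (k + deriv \<theta> x) - 1) = 0"
      using re[of x] const[of x] by (simp add: power2_eq_square power3_eq_cube algebra_simps)
    then have "(\<Omega> - (\<phi> 0)^2) * (k + deriv \<theta> x) = 1" using h by simp
    then show "deriv \<theta> x = (k * (\<phi> 0)\<^sup>2 - k * \<Omega> + 1) / (\<Omega> - (\<phi> 0)\<^sup>2)"
      using n by (simp add: field_simps)
  qed
qed

end
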